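(* Let $G$ be a bus graph, and let $G'$ be the bus graph obtained from $G$ by removing duplicate $\mathcal{C}$-vertices, i.e. keeping exactly one $\mathcal{C}$-vertex from each class of $\mathcal{C}$-vertices having identical neighborhoods in $\mathcal{B}$ (and deleting the others with their edges). Then $G$ is realizable if and only if $G'$ is realizable.
   Context: A bus graph is a finite bipartite graph $G=(\mathcal{B},\mathcal{C};\mathcal{E})$ with $\deg(c)\le 4$ for all $c\in\mathcal{C}$. A realization $\Gamma$ of $G$ in the integer grid is a drawing such that: (1) each $B\in\mathcal{B}$ is drawn as a closed line segment $\Gamma(B)$ along a grid line (a "bus"); (2) each $c\in\mathcal{C}$ is drawn as a grid point $\Gamma(c)$ (a "connector"); (3) each edge $(B,c)\in\mathcal{E}$ is drawn as a closed line segment along a grid line between a point of $\Gamma(B)$ and $\Gamma(c)$, perpendicular to $\Gamma(B)$, containing no connectors or buses other than $\Gamma(B)$ and $\Gamma(c)$ (an edge may meet the bus at an endpoint of the bus; edges may cross other edges); (4) no two buses or connectors intersect. $G$ is realizable if it has such a realization. *)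

theory Defs
  imports Complex_Main
begin

definition bus_graph :: "'b set \<Rightarrow> 'c set \<Rightarrow> ('b \<times> 'c) set \<Rightarrow> bool" where
  "bus_graph Bs Cs E \<longleftrightarrow> finite Bs \<and> finite Cs \<and> E \<subseteq> Bs \<times> Cs \<and>
     (\<forall>c\<in>Cs. card {B\<in>Bs. (B, c) \<in> E} \<le> 4)"

definition nbhd :: "('b \<times> 'c) set \<Rightarrow> 'c \<Rightarrow> 'b set" where
  "nbhd E c = {B. (B, c) \<in> E}"

definition vseg :: "real \<Rightarrow> real \<Rightarrow> real \<Rightarrow> (real \<times> real) set" where
  "vseg x y1 y2 = {(x', y). x' = x \<and> min y1 y2 \<le> y \<and> y \<le> max y1 y2}"

definition hseg :: "real \<Rightarrow> real \<Rightarrow> real \<Rightarrow> (real \<times> real) set" where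
  "hseg y x1 x2 = {(x, y'). y' = y \<and> min x1 x2 \<le> x \<and> x \<le> max x1 x2}"

definition bus_seg :: "('b \<Rightarrow> bool) \<Rightarrow> ('b \<Rightarrow> int) \<Rightarrow> ('b \<Rightarrow> real) \<Rightarrow> ('b \<Rightarrow> real) \<Rightarrow> 'b
    \<Rightarrow> (real \<times> real) set" where
  "bus_seg hor L lo hi B =
     (if hor B then hseg (of_int (L B)) (lo B) (hi B) else vseg (of_int (L B)) (lo B) (hi B))"

definition cpt :: "('c \<Rightarrow> int \<times> int) \<Rightarrow> 'c \<Rightarrow> real \<times> real" where
  "cpt pos c = (of_int (fst (pos c)), of_int (snd (pos c)))"

definition edge_seg :: "('b \<Rightarrow> bool) \<Rightarrow> ('b \<Rightarrow> int) \<Rightarrow> ('c \<Rightarrow> int \<times> int) \<Rightarrow> 'b \<Rightarrow> 'c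
    \<Rightarrow> (real \<times> real) set" where
  "edge_seg hor L pos B c =
     (if hor B then vseg (fst (cpt pos c)) (of_int (L B)) (snd (cpt pos c))
      else hseg (snd (cpt pos c)) (of_int (L B)) (fst (cpt pos c)))"

definition edge_foot :: "('b \<Rightarrow> bool) \<Rightarrow> ('b \<Rightarrow> int) \<Rightarrow> ('c \<Rightarrow> int \<times> int) \<Rightarrow> 'b \<Rightarrow> 'c
    \<Rightarrow> real \<times> real" where
  "edge_foot hor L pos B c =
     (if hor B then (fst (cpt pos c), of_int (L B)) else (of_int (L B), snd (cpt pos c)))"

definition is_realization ::
  "'b set \<Rightarrow> 'c set \<Rightarrow> ('b \<times> 'c) set \<Rightarrow> ('b \<Rightarrow> bool) \<Rightarrow> ('b \<Rightarrow> int) \<Rightarrow> ('b \<Rightarrow> real)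
    \<Rightarrow> ('b \<Rightarrow> real) \<Rightarrow> ('c \<Rightarrow> int \<times> int) \<Rightarrow> bool" where
  "is_realization Bs Cs E hor L lo hi pos \<longleftrightarrow>
     (\<forall>B\<in>Bs. lo B \<le> hi B) \<and>
     (\<forall>B\<in>Bs. \<forall>c. (B, c) \<in> E \<longrightarrow>
        edge_foot hor L pos B c \<in> bus_seg hor L lo hi B \<and>
        (\<forall>B'\<in>Bs. B' \<noteq> B \<longrightarrow> edge_seg hor L pos B c \<inter> bus_seg hor L lo hi B' = {}) \<and>
        (\<forall>c'\<in>Cs. c' \<noteq> c \<longrightarrow> cpt pos c' \<notin> edge_seg hor L pos B c)) \<and>
     (\<forall>B\<in>Bs. \<forall>B'\<in>Bs. B \<noteq> B' \<longrightarrow> bus_seg hor L lo hi B \<inter> bus_seg hor L lo hi B' = {}) \<and>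
     (\<forall>c\<in>Cs. \<forall>c'\<in>Cs. c \<noteq> c' \<longrightarrow> pos c \<noteq> pos c') \<and>
     (\<forall>B\<in>Bs. \<forall>c\<in>Cs. cpt pos c \<notin> bus_seg hor L lo hi B)"

definition realizable :: "'b set \<Rightarrow> 'c set \<Rightarrow> ('b \<times> 'c) set \<Rightarrow> bool" where
  "realizable Bs Cs E \<longleftrightarrow> (\<exists>hor L lo hi pos. is_realization Bs Cs E hor L lo hi pos)"

end

theory Submission imports Defs begin

definition fr :: "real \<Rightarrow> real \<Rightarrow> real" where "fr a u = (if u \<le> a then u else u + 1)"
definition gr :: "real \<Rightarrow> real \<Rightarrow> real" where "gr a u = (if u < a then u else u + 1)"
definition pr :: "real \<Rightarrow> real \<Rightarrow> real" where
  "pr a u = (if u \<le> a then u else if u \<ge> a + 1 then u - 1 else a)"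
definition fi :: "int \<Rightarrow> int \<Rightarrow> int" where "fi a k = (if k \<le> a then k else k + 1)"

lemma pr_mono: "x \<le> y \<Longrightarrow> pr a x \<le> pr a y" by (auto simp: pr_def)
lemma pr_fr[simp]: "pr a (fr a u) = u" by (auto simp: pr_def fr_def)
lemma pr_gr[simp]: "pr a (gr a u) = u" by (auto simp: pr_def gr_def)
lemma pr_a1[simp]: "pr a (a + 1) = a" by (auto simp: pr_def)
lemma of_int_fi[simp]: "real_of_int (fi a k) = fr (of_int a) (of_int k)" by (auto simp: fi_def fr_def)
lemma fr_int_ne: "fr (of_int a) (of_int k) \<noteq> of_int a + 1" by (auto simp: fr_def)
lemma fr_le_gr: "lo \<le> hi \<Longrightarrow> fr a lo \<le> gr a hi" by (auto simp: fr_def gr_def)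
lemma fr_mem: "lo \<le> x \<Longrightarrow> x \<le> hi \<Longrightarrow> fr a lo \<le> fr a x \<and> fr a x \<le> gr a hi"
  by (auto simp: fr_def gr_def)
lemma a1_mem: "lo \<le> a \<Longrightarrow> a \<le> hi \<Longrightarrow> fr a lo \<le> a + 1 \<and> a + 1 \<le> gr a hi"
  by (auto simp: fr_def gr_def)

lemma pr_between: "min X1 X2 \<le> u \<Longrightarrow> u \<le> max X1 X2 \<Longrightarrow>
   min (pr a X1) (pr a X2) \<le> pr a u \<and> pr a u \<le> max (pr a X1) (pr a X2)"
  using pr_mono[of X1 u a] pr_mono[of X2 u a] pr_mono[of u X1 a] pr_mono[of u X2 a]
  by (auto simp: min_def max_def split: if_splits)

lemma hseg_pi: "(u, v) \<in> hseg Y X1 X2 \<Longrightarrow> (pr a u, pr b v) \<in> hseg (pr b Y) (pr a X1) (pr a X2)"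
  unfolding hseg_def using pr_between by auto
lemma vseg_pi: "(u, v) \<in> vseg X Y1 Y2 \<Longrightarrow> (pr a u, pr b v) \<in> vseg (pr a X) (pr b Y1) (pr b Y2)"
  unfolding vseg_def using pr_between by auto

lemma add_one:
  assumes R: "is_realization Bs S (E \<inter> (Bs \<times> S)) hor L lo hi pos"
    and cS: "c \<in> S" and dS: "d \<notin> S" and nb: "\<And>B. (B, d) \<in> E \<longleftrightarrow> (B, c) \<in> E"
  shows "realizable Bs (insert d S) (E \<inter> (Bs \<times> insert d S))"
proof -
  obtain a b where pc: "pos c = (a, b)" by (cases "pos c") auto
  define L' where "L' B = (if hor B then fi b (L B) else fi a (L B))" for B
  define lo' where "lo' B = (if hor B then fr (of_int a) (lo B) else fr (of_int b) (lo B))" for B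
  define hi' where "hi' B = (if hor B then gr (of_int a) (hi B) else gr (of_int b) (hi B))" for B
  define pos' where "pos' e = (if e = d then (a + 1, b + 1) else (fi a (fst (pos e)), fi b (snd (pos e))))" for e
  define \<sigma> where "\<sigma> e = (if e = d then c else e)" for e
  define Pi where "Pi p = (pr (of_int a) (fst p), pr (of_int b) (snd p))" for p
  have cd: "c \<noteq> d" using cS dS by auto
  have K1: "Pi p \<in> bus_seg hor L lo hi B" if "p \<in> bus_seg hor L' lo' hi' B" for p B
  proof -
    obtain u v where p: "p = (u, v)" by (cases p)
    show ?thesis
    proof (cases "hor B")
      case True
      then show ?thesis using that hseg_pi[of u v "of_int (L' B)" "lo' B" "hi' B" "of_int a" "of_int b"]
        by (simp add: p Pi_def bus_seg_def L'_def lo'_def hi'_def)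
    next
      case False
      then show ?thesis using that vseg_pi[of u v "of_int (L' B)" "lo' B" "hi' B" "of_int a" "of_int b"]
        by (simp add: p Pi_def bus_seg_def L'_def lo'_def hi'_def)
    qed
  qed
  have K2: "Pi (cpt pos' e) = cpt pos (\<sigma> e)" for e
    by (simp add: Pi_def cpt_def pos'_def \<sigma>_def pc)
  have K3: "Pi p \<in> edge_seg hor L pos B (\<sigma> e)" if "p \<in> edge_seg hor L' pos' B e" for p B e
  proof -
    obtain u v where p: "p = (u, v)" by (cases p)
    have e1: "pr (of_int a) (fst (cpt pos' e)) = fst (cpt pos (\<sigma> e))"
      and e2: "pr (of_int b) (snd (cpt pos' e)) = snd (cpt pos (\<sigma> e))"
      using K2[of e] by (simp_all add: Pi_def prod_eq_iff)
    show ?thesis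
    proof (cases "hor B")
      case True
      then show ?thesis using that vseg_pi[of u v "fst (cpt pos' e)" "of_int (L' B)" "snd (cpt pos' e)" "of_int a" "of_int b"]
        by (simp add: p Pi_def edge_seg_def L'_def e1 e2)
    next
      case False
      then show ?thesis using that hseg_pi[of u v "snd (cpt pos' e)" "of_int (L' B)" "fst (cpt pos' e)" "of_int a" "of_int b"]
        by (simp add: p Pi_def edge_seg_def L'_def e1 e2)
    qed
  qed
  have posc': "pos' c = (a, b)" using cd by (simp add: pos'_def pc fi_def)
  have posd': "pos' d = (a + 1, b + 1)" by (simp add: pos'_def)
  note Rd = R[unfolded is_realization_def]
  have "is_realization Bs (insert d S) (E \<inter> (Bs \<times> insert d S)) hor L' lo' hi' pos'"
    unfolding is_realization_def
  proof (intro conjI ballI allI impI)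
    fix B assume "B \<in> Bs"
    then show "lo' B \<le> hi' B" using Rd by (simp add: lo'_def hi'_def fr_le_gr)
  next
    fix B e assume B: "B \<in> Bs" and Be: "(B, e) \<in> E \<inter> Bs \<times> insert d S"
    have Bs: "(B, \<sigma> e) \<in> E \<inter> Bs \<times> S" using Be nb cS by (auto simp: \<sigma>_def)
    show "edge_foot hor L' pos' B e \<in> bus_seg hor L' lo' hi' B"
    proof -
      have ft: "edge_foot hor L pos B (\<sigma> e) \<in> bus_seg hor L lo hi B" and lh: "lo B \<le> hi B"
        using Rd B Bs by auto
      show ?thesis
      proof (cases "e = d")
        case True
        then show ?thesis using ft lh a1_mem[of "lo B" "of_int a" "hi B"] a1_mem[of "lo B" "of_int b" "hi B"]
          fr_le_gr[of "lo B" "hi B"]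
          by (auto simp: edge_foot_def bus_seg_def hseg_def vseg_def cpt_def pos'_def \<sigma>_def pc L'_def lo'_def hi'_def)
      next
        case False
        then show ?thesis using ft lh fr_mem[of "lo B" _ "hi B" "of_int a"] fr_mem[of "lo B" _ "hi B" "of_int b"]
          fr_le_gr[of "lo B" "hi B"]
          by (auto simp: edge_foot_def bus_seg_def hseg_def vseg_def cpt_def pos'_def \<sigma>_def L'_def lo'_def hi'_def)
      qed
    qed
    show "edge_seg hor L' pos' B e \<inter> bus_seg hor L' lo' hi' B' = {}" if "B' \<in> Bs" "B' \<noteq> B" for B'
    proof -
      have "edge_seg hor L pos B (\<sigma> e) \<inter> bus_seg hor L lo hi B' = {}" using Rd B Bs that by auto
      then show ?thesis using K1 K3 by blast
    qed
    show "cpt pos' e' \<notin> edge_seg hor L' pos' B e" if e': "e' \<in> insert d S" "e' \<noteq> e" for e'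
    proof
      assume m: "cpt pos' e' \<in> edge_seg hor L' pos' B e"
      have m2: "cpt pos (\<sigma> e') \<in> edge_seg hor L pos B (\<sigma> e)" using K3[OF m] K2 by simp
      have "\<sigma> e' \<in> S" using e' cS by (auto simp: \<sigma>_def)
      then have "\<sigma> e' = \<sigma> e" using m2 Rd B Bs by blast
      then have "(e = c \<and> e' = d) \<or> (e = d \<and> e' = c)" using e' by (auto simp: \<sigma>_def split: if_splits)
      then show False using m cd
        by (auto simp: edge_seg_def cpt_def posc' posd' hseg_def vseg_def split: if_splits)
    qed
  next
    fix B B' assume "B \<in> Bs" "B' \<in> Bs" "B \<noteq> B'"
    then have "bus_seg hor L lo hi B \<inter> bus_seg hor L lo hi B' = {}" using Rd by auto
    then show "bus_seg hor L' lo' hi' B \<inter> bus_seg hor L' lo' hi' B' = {}" using K1 by blast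
  next
    fix e e' assume e: "e \<in> insert d S" "e' \<in> insert d S" "e \<noteq> e'"
    show "pos' e \<noteq> pos' e'"
    proof
      assume eq: "pos' e = pos' e'"
      then have "cpt pos (\<sigma> e) = cpt pos (\<sigma> e')" using K2 by (metis cpt_def)
      then have "pos (\<sigma> e) = pos (\<sigma> e')" by (simp add: cpt_def prod_eq_iff)
      moreover have "\<sigma> e \<in> S" "\<sigma> e' \<in> S" using e cS by (auto simp: \<sigma>_def)
      ultimately have "\<sigma> e = \<sigma> e'" using Rd by blast
      then have "(e = c \<and> e' = d) \<or> (e = d \<and> e' = c)" using e by (auto simp: \<sigma>_def split: if_splits)
      then show False using eq posc' posd' by auto
    qed
  next
    fix B e assume "B \<in> Bs" "e \<in> insert d S"
    moreover have "\<sigma> e \<in> S" using \<open>e \<in> insert d S\<close> cS by (auto simp: \<sigma>_def)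
    ultimately have "cpt pos (\<sigma> e) \<notin> bus_seg hor L lo hi B" using Rd by blast
    then show "cpt pos' e \<notin> bus_seg hor L' lo' hi' B" using K1 K2 by metis
  qed
  then show ?thesis unfolding realizable_def by blast
qed

lemma restrict_real:
  assumes "is_realization Bs Cs E hor L lo hi pos" "Cs' \<subseteq> Cs"
  shows "is_realization Bs Cs' (E \<inter> (Bs \<times> Cs')) hor L lo hi pos"
  using assms unfolding is_realization_def by (simp add: subset_iff)
theorem lemma1:
  fixes Bs :: "'b set" and Cs Cs' :: "'c set" and E :: "('b \<times> 'c) set"
  assumes "bus_graph Bs Cs E"
    and "Cs' \<subseteq> Cs"
    and "\<forall>c\<in>Cs. \<exists>!c'. c' \<in> Cs' \<and> nbhd E c' = nbhd E c"
  shows "realizable Bs Cs E \<longleftrightarrow> realizable Bs Cs' (E \<inter> (Bs \<times> Cs'))"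
proof
  assume "realizable Bs Cs E"
  then show "realizable Bs Cs' (E \<inter> (Bs \<times> Cs'))"
    using restrict_real[OF _ assms(2)] unfolding realizable_def by blast
next
  assume R0: "realizable Bs Cs' (E \<inter> (Bs \<times> Cs'))"
  have fin: "finite Cs" and EB: "E \<subseteq> Bs \<times> Cs" using assms(1) by (auto simp: bus_graph_def)
  have "D \<subseteq> Cs - Cs' \<Longrightarrow> realizable Bs (Cs' \<union> D) (E \<inter> (Bs \<times> (Cs' \<union> D)))" for D
  proof (induction D rule: infinite_finite_induct)
    case (infinite A)
    then show ?case using fin finite_subset by blast
  next
    case empty
    then show ?case using R0 by simp
  next
    case (insert d D)
    then have dC: "d \<in> Cs" and dn: "d \<notin> Cs' \<union> D" and IH: "realizable Bs (Cs' \<union> D) (E \<inter> (Bs \<times> (Cs' \<union> D)))"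
      by auto
    obtain c where c: "c \<in> Cs'" "nbhd E c = nbhd E d" using assms(3) dC by blast
    have nb: "(B, d) \<in> E \<longleftrightarrow> (B, c) \<in> E" for B using c(2) by (auto simp: nbhd_def set_eq_iff)
    obtain hor L lo hi pos where "is_realization Bs (Cs' \<union> D) (E \<inter> (Bs \<times> (Cs' \<union> D))) hor L lo hi pos"
      using IH unfolding realizable_def by blast
    from add_one[OF this _ dn nb] c(1) show ?case by simp
  qed
  from this[of "Cs - Cs'"] show "realizable Bs Cs E"
    using assms(2) EB by (simp add: Un_absorb1 Int_absorb2)
qed

end
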